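(* Let $\mathcal{E}=(E,\leq,\sharp)$ be a prime event structure, $C$ a configuration of $\mathcal{E}$, and $e,e'\in E$. Suppose there are processes $P_1,P_2,P_3,P_4$ with $\emptyset\triangleright\textsc{espsi}(\mathcal{E},C)\xrightarrow{\overline{e}e}P_1$, $\emptyset\triangleright P_1\xrightarrow{\overline{e'}e'}P_2$, $\emptyset\triangleright\textsc{espsi}(\mathcal{E},C)\xrightarrow{\overline{e'}e'}P_3$, $\emptyset\triangleright P_3\xrightarrow{\overline{e}e}P_4$, and $P_2=P_4$. Then $e\,||\,e'$ in $\mathcal{E}$.
   Context: A prime event structure is a triple $\mathcal{E}=(E,\leq,\sharp)$ where $E$ is a set of events (names from a nominal set), $\leq$ is a partial order on $E$ with $\{d\mid d\leq e\}$ finite for every $e$, and $\sharp$ is an irreflexive symmetric relation on $E$ with conflict heredity ($d\leq e$ and $d\sharp f$ imply $e\sharp f$). Two events are concurrent, $d\,||\,e$, iff none of $d\leq e$, $e\leq d$, $d\sharp e$ holds. A configuration is a finite, conflict-free, downward-closed subset of $E$. Psi-calculus fragment. Processes: assertion processes $(\!|\Psi|\!)$, output prefixes $\overline{M}\langle N\rangle.P$, case processes $\mathbf{case}\ \varphi_1:P_1,\dots,\varphi_n:P_n$, and parallel compositions (also of infinite families). Frames: $\mathcal{F}((\!|\Psi|\!))=\Psi$, $\mathcal{F}(P\mid Q)=\mathcal{F}(P)\otimes\mathcal{F}(Q)$ (composition over all components for families), and the frame of prefixed and case processes is the unit $\mathbf{1}$. Transitions $\Psi\triangleright P\xrightarrow{\alpha}P'$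 are generated by: (Out) if $\Psi\vdash M\leftrightarrow K$ then $\Psi\triangleright\overline{M}\langle N\rangle.P\xrightarrow{\overline{K}N}P$; (Case) if $\Psi\triangleright P_i\xrightarrow{\alpha}P'$ and $\Psi\vdash\varphi_i$ then $\Psi\triangleright\mathbf{case}\ \tilde\varphi:\tilde P\xrightarrow{\alpha}P'$; (Par) if $\Psi\otimes\mathcal{F}(Q)\triangleright P\xrightarrow{\alpha}P'$ then $\Psi\triangleright P\mid Q\xrightarrow{\alpha}P'\mid Q$, symmetrically for $Q$, and for a parallel family one component moves in context $\Psi$ composed with the frames of all other components, the others remaining unchanged. Assertion processes have no transitions. Event-psi instance over $E$: terms are elements of $E$; conditions are pairs $(L,R)$ of subsets of $E$; assertions are subsets of $E$; $\otimes=\cup$; $\mathbf{1}=\emptyset$; entailment: $\Psi\vdash(L,R)$ iff $L\subseteq\Psi$ and $\Psi\cap R=\emptyset$, and $\Psi\vdash a\leftrightarrow b$ iff $a=b$. Translation: $\textsc{espsi}(\mathcal{E},C)=\big|_{e\in E}P_e$ where $P_e=(\!|\{e\}|\!)$ if $e\in C$ and otherwise $P_e=\mathbf{case}\ \varphi_e:\overline{e}\langle e\rangle.(\!|\{e\}|\!)$, with $\varphi_e=(\{d\in E\mid d\leq e,\ d\neq e\},\{d\in E\mid d\sharp e\})$. Processes are compared as $E$-indexed parallel families. The paper writes the transition labelled $\overline{e}e$ simply as $\xrightarrow{e}$. *)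

theory Defs
  imports Main
begin

definition prime_es :: "'a set \<Rightarrow> ('a \<Rightarrow> 'a \<Rightarrow> bool) \<Rightarrow> ('a \<Rightarrow> 'a \<Rightarrow> bool) \<Rightarrow> bool" where
  "prime_es E leq cf \<longleftrightarrow>
     (\<forall>d e. leq d e \<longrightarrow> d \<in> E \<and> e \<in> E) \<and>
     (\<forall>e\<in>E. leq e e) \<and>
     (\<forall>d\<in>E. \<forall>e\<in>E. leq d e \<and> leq e d \<longrightarrow> d = e) \<and>
     (\<forall>c\<in>E. \<forall>d\<in>E. \<forall>e\<in>E. leq c d \<and> leq d e \<longrightarrow> leq c e) \<and>
     (\<forall>e\<in>E. finite {d. leq d e}) \<and>
     (\<forall>d e. cf d e \<longrightarrow> d \<in> E \<and> e \<in> E) \<and>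
     (\<forall>e. \<not> cf e e) \<and>
     (\<forall>d e. cf d e \<longrightarrow> cf e d) \<and>
     (\<forall>d e f. leq d e \<and> cf d f \<longrightarrow> cf e f)"

definition configuration :: "'a set \<Rightarrow> ('a \<Rightarrow> 'a \<Rightarrow> bool) \<Rightarrow> ('a \<Rightarrow> 'a \<Rightarrow> bool) \<Rightarrow> 'a set \<Rightarrow> bool" where
  "configuration E leq cf C \<longleftrightarrow>
     finite C \<and> C \<subseteq> E \<and> (\<forall>d\<in>C. \<forall>e\<in>C. \<not> cf d e) \<and>
     (\<forall>e\<in>C. \<forall>d. leq d e \<longrightarrow> d \<in> C)"

definition concurrent :: "('a \<Rightarrow> 'a \<Rightarrow> bool) \<Rightarrow> ('a \<Rightarrow> 'a \<Rightarrow> bool) \<Rightarrow> 'a \<Rightarrow> 'a \<Rightarrow> bool" where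
  "concurrent leq cf d e \<longleftrightarrow> \<not> leq d e \<and> \<not> leq e d \<and> \<not> cf d e"

type_synonym 'a cond = "'a set \<times> 'a set"

definition entails :: "'a set \<Rightarrow> 'a cond \<Rightarrow> bool" where
  "entails \<Psi> \<phi> \<longleftrightarrow> fst \<phi> \<subseteq> \<Psi> \<and> \<Psi> \<inter> snd \<phi> = {}"

definition chan_eq :: "'a set \<Rightarrow> 'a \<Rightarrow> 'a \<Rightarrow> bool" where
  "chan_eq \<Psi> a b \<longleftrightarrow> a = b"

datatype 'a proc =
    Assert "'a set"
  | Out 'a 'a "'a proc"
  | Case "('a cond \<times> 'a proc) list"
  | Par "'a proc" "'a proc"

datatype 'a label = OutL 'a 'a

fun frame :: "'a proc \<Rightarrow> 'a set" where
  "frame (Assert \<Psi>) = \<Psi>"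
| "frame (Out M N P) = {}"
| "frame (Case cs) = {}"
| "frame (Par P Q) = frame P \<union> frame Q"

inductive trans :: "'a set \<Rightarrow> 'a proc \<Rightarrow> 'a label \<Rightarrow> 'a proc \<Rightarrow> bool" where
  OutR: "chan_eq \<Psi> M K \<Longrightarrow> trans \<Psi> (Out M N P) (OutL K N) P"
| CaseR: "(\<phi>, P) \<in> set cs \<Longrightarrow> trans \<Psi> P \<alpha> P' \<Longrightarrow> entails \<Psi> \<phi> \<Longrightarrow> trans \<Psi> (Case cs) \<alpha> P'"
| ParL: "trans (\<Psi> \<union> frame Q) P \<alpha> P' \<Longrightarrow> trans \<Psi> (Par P Q) \<alpha> (Par P' Q)"
| ParR: "trans (\<Psi> \<union> frame P) Q \<alpha> Q' \<Longrightarrow> trans \<Psi> (Par P Q) \<alpha> (Par P Q')"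

type_synonym 'a family = "'a \<Rightarrow> 'a proc"

definition fam_trans :: "'a set \<Rightarrow> 'a set \<Rightarrow> 'a family \<Rightarrow> 'a label \<Rightarrow> 'a family \<Rightarrow> bool" where
  "fam_trans E \<Psi> F \<alpha> G \<longleftrightarrow>
     (\<exists>i\<in>E. \<exists>P'. trans (\<Psi> \<union> (\<Union>d\<in>E - {i}. frame (F d))) (F i) \<alpha> P' \<and> G = F(i := P'))"

definition cond_of :: "'a set \<Rightarrow> ('a \<Rightarrow> 'a \<Rightarrow> bool) \<Rightarrow> ('a \<Rightarrow> 'a \<Rightarrow> bool) \<Rightarrow> 'a \<Rightarrow> 'a cond" where
  "cond_of E leq cf e = ({d\<in>E. leq d e \<and> d \<noteq> e}, {d\<in>E. cf d e})"

definition espsi :: "'a set \<Rightarrow> ('a \<Rightarrow> 'a \<Rightarrow> bool) \<Rightarrow> ('a \<Rightarrow> 'a \<Rightarrow> bool) \<Rightarrow> 'a set \<Rightarrow> 'a family" where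
  "espsi E leq cf C = (\<lambda>e. if e \<in> C then Assert {e}
                           else Case [(cond_of E leq cf e, Out e e (Assert {e}))])"

end

theory Submission
  imports Defs
begin

lemma trans_assert: "trans \<Psi> (Assert X) \<alpha> P' \<Longrightarrow> False"
  by (cases rule: trans.cases) auto

lemma trans_case:
  assumes "trans \<Psi> (Case [(\<phi>, Out i i (Assert {i}))]) (OutL a b) P'"
  shows "a = i \<and> b = i \<and> entails \<Psi> \<phi> \<and> P' = Assert {i}"
  using assms
proof (cases rule: trans.cases)
  case (CaseR \<phi>' P)
  then have "\<phi>' = \<phi>" "P = Out i i (Assert {i})" by auto
  with CaseR(3) show ?thesis using CaseR
    by (auto elim: trans.cases simp: chan_eq_def)
qed

lemma step:
  assumes "fam_trans E \<Psi> F (OutL a a) G"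
    and "\<forall>i. F i = Assert {i} \<or> F i = Case [(cond_of E leq cf i, Out i i (Assert {i}))]"
  shows "a \<in> E \<and> F a = Case [(cond_of E leq cf a, Out a a (Assert {a}))] \<and>
         entails (\<Psi> \<union> (\<Union>d\<in>E - {a}. frame (F d))) (cond_of E leq cf a)"
proof -
  obtain i P' where i: "i \<in> E" and t: "trans (\<Psi> \<union> (\<Union>d\<in>E - {i}. frame (F d))) (F i) (OutL a a) P'"
    using assms(1) unfolding fam_trans_def by blast
  from assms(2) have "F i = Assert {i} \<or> F i = Case [(cond_of E leq cf i, Out i i (Assert {i}))]" by blast
  then show ?thesis
  proof
    assume "F i = Assert {i}" with t show ?thesis using trans_assert by metis
  next
    assume h: "F i = Case [(cond_of E leq cf i, Out i i (Assert {i}))]"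
    with t have "a = i \<and> entails (\<Psi> \<union> (\<Union>d\<in>E - {i}. frame (F d))) (cond_of E leq cf i)"
      using trans_case by metis
    with h i show ?thesis by auto
  qed
qed

theorem mainTheorem4:
  fixes E :: "'a set" and leq cf :: "'a \<Rightarrow> 'a \<Rightarrow> bool" and C :: "'a set"
    and e e' :: 'a and P1 P2 P3 P4 :: "'a family"
  assumes "prime_es E leq cf"
    and "configuration E leq cf C"
    and "e \<in> E" and "e' \<in> E"
    and "fam_trans E {} (espsi E leq cf C) (OutL e e) P1"
    and "fam_trans E {} P1 (OutL e' e') P2"
    and "fam_trans E {} (espsi E leq cf C) (OutL e' e') P3"
    and "fam_trans E {} P3 (OutL e e) P4"
    and "P2 = P4"
  shows "concurrent leq cf e e'"
proof -
  let ?F = "espsi E leq cf C"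
  have F: "\<forall>i. ?F i = Assert {i} \<or> ?F i = Case [(cond_of E leq cf i, Out i i (Assert {i}))]"
    by (simp add: espsi_def)
  have CE: "C \<subseteq> E" using assms(2) unfolding configuration_def by blast
  have s1: "?F e = Case [(cond_of E leq cf e, Out e e (Assert {e}))]
     \<and> entails ({} \<union> (\<Union>d\<in>E - {e}. frame (?F d))) (cond_of E leq cf e)"
    using step[OF assms(5) F] by blast
  have eC: "e \<notin> C" using s1 by (simp add: espsi_def split: if_splits)
  have s3: "?F e' = Case [(cond_of E leq cf e', Out e' e' (Assert {e'}))]
     \<and> entails ({} \<union> (\<Union>d\<in>E - {e'}. frame (?F d))) (cond_of E leq cf e')"
    using step[OF assms(7) F] by blast
  have e'C: "e' \<notin> C" using s3 by (simp add: espsi_def split: if_splits)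
  have U: "\<And>x. x \<notin> C \<Longrightarrow> (\<Union>d\<in>E - {x}. frame (?F d)) = C"
    using CE by (auto simp: espsi_def split: if_splits)
  have pred: "\<And>x d. x \<notin> C \<Longrightarrow> entails ({} \<union> (\<Union>d\<in>E - {x}. frame (?F d))) (cond_of E leq cf x)
     \<Longrightarrow> d \<in> E \<Longrightarrow> leq d x \<Longrightarrow> d \<noteq> x \<Longrightarrow> d \<in> C"
    using U by (auto simp: entails_def cond_of_def)
  obtain P' where P1: "P1 = ?F(e := P')" and P': "P' = Assert {e}"
  proof -
    obtain j Q where "j \<in> E" "P1 = ?F(j := Q)"
      "trans ({} \<union> (\<Union>d\<in>E - {j}. frame (?F d))) (?F j) (OutL e e) Q"
      using assms(5) unfolding fam_trans_def by blast
    moreover have "?F j = Assert {j} \<or> ?F j = Case [(cond_of E leq cf j, Out j j (Assert {j}))]"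
      using F by blast
    ultimately have "j = e \<and> Q = Assert {e}" using trans_case trans_assert by metis
    with \<open>P1 = ?F(j := Q)\<close> show ?thesis using that by blast
  qed
  have F1: "\<forall>i. P1 i = Assert {i} \<or> P1 i = Case [(cond_of E leq cf i, Out i i (Assert {i}))]"
    using F P1 P' by auto
  have s2: "P1 e' = Case [(cond_of E leq cf e', Out e' e' (Assert {e'}))]
     \<and> entails ({} \<union> (\<Union>d\<in>E - {e'}. frame (P1 d))) (cond_of E leq cf e')"
    using step[OF assms(6) F1] by blast
  have ne: "e \<noteq> e'" using s2 P1 P' by auto
  have "e \<in> (\<Union>d\<in>E - {e'}. frame (P1 d))" using ne assms(3) P1 P' by force
  hence ncf: "\<not> cf e e'" using s2 assms(3) by (auto simp: entails_def cond_of_def)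
  have "\<not> leq e e'" using pred[OF e'C conjunct2[OF s3] assms(3)] ne eC by blast
  moreover have "\<not> leq e' e" using pred[OF eC conjunct2[OF s1] assms(4)] ne e'C by blast
  ultimately show ?thesis using ncf by (simp add: concurrent_def)
qed

end
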